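(* Let $G$ be a finite group and $X$ an $\mathtt{N}$-class of $G$. Then the partition of $X$ into its intersections with the $\circ$-classes of $G$ coincides with the partition of $X$ into $\diamond$-classes.
   Context: The power graph $\mathcal{P}(G)$ has vertex set $G$, and distinct $x,y$ are adjacent iff one is a positive integer power of the other. $x\mathtt{N}y$ iff $x$ and $y$ have the same closed neighbourhood in $\mathcal{P}(G)$. $x\diamond y$ iff $\langle x\rangle=\langle y\rangle$. $x\circ y$ iff $o(x)=o(y)$. Each $\mathtt{N}$-class is a union of $\diamond$-classes. *)

theory Defs
  imports "HOL-Algebra.Algebra"
begin

definition power_adj :: "('a, 'b) monoid_scheme \<Rightarrow> 'a \<Rightarrow> 'a \<Rightarrow> bool" where
  "power_adj G x y \<longleftrightarrow> x \<in> carrier G \<and> y \<in> carrier G \<and> x \<noteq> y \<and>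
     ((\<exists>n::nat. n \<ge> 1 \<and> y = x [^]\<^bsub>G\<^esub> n) \<or> (\<exists>n::nat. n \<ge> 1 \<and> x = y [^]\<^bsub>G\<^esub> n))"

definition closed_nbhd :: "('a, 'b) monoid_scheme \<Rightarrow> 'a \<Rightarrow> 'a set" where
  "closed_nbhd G x = {y \<in> carrier G. y = x \<or> power_adj G x y}"

definition relN :: "('a, 'b) monoid_scheme \<Rightarrow> 'a \<Rightarrow> 'a \<Rightarrow> bool" where
  "relN G x y \<longleftrightarrow> x \<in> carrier G \<and> y \<in> carrier G \<and> closed_nbhd G x = closed_nbhd G y"

definition rel_diamond :: "('a, 'b) monoid_scheme \<Rightarrow> 'a \<Rightarrow> 'a \<Rightarrow> bool" where
  "rel_diamond G x y \<longleftrightarrow> x \<in> carrier G \<and> y \<in> carrier G \<and> generate G {x} = generate G {y}"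

definition rel_circ :: "('a, 'b) monoid_scheme \<Rightarrow> 'a \<Rightarrow> 'a \<Rightarrow> bool" where
  "rel_circ G x y \<longleftrightarrow> x \<in> carrier G \<and> y \<in> carrier G \<and> group.ord G x = group.ord G y"

definition rel_class :: "('a, 'b) monoid_scheme \<Rightarrow> ('a \<Rightarrow> 'a \<Rightarrow> bool) \<Rightarrow> 'a \<Rightarrow> 'a set" where
  "rel_class G R x = {y \<in> carrier G. R x y}"

end

theory Submission
  imports Defs
begin

context group
begin

lemma pn_pospow:
  assumes fin: "finite (carrier G)" and a: "a \<in> carrier G" and b: "b \<in> generate G {a}"
  shows "\<exists>n::nat. n \<ge> 1 \<and> b = a [^] n"
proof -
  obtain k :: nat where k: "b = a [^] k"
    using b generate_pow_on_finite_carrier[OF fin a] by blast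
  show ?thesis
  proof (cases "k = 0")
    case True
    then have "b = a [^] ord a" using k a by simp
    then show ?thesis using ord_ge_1[OF fin a] by blast
  next
    case False then show ?thesis using k by (intro exI[of _ k]) simp
  qed
qed

lemma pn_pow_in_gen:
  assumes fin: "finite (carrier G)" and a: "a \<in> carrier G"
  shows "a [^] (n::nat) \<in> generate G {a}"
  using generate_pow_on_finite_carrier[OF fin a] by blast

lemma pn_gen_sub:
  assumes fin: "finite (carrier G)" and a: "a \<in> carrier G"
  shows "generate G {a [^] (n::nat)} \<subseteq> generate G {a}"
  apply (rule generate_subgroup_incl)
  using pn_pow_in_gen[OF fin a] generate_is_subgroup a by auto

lemma pn_nbhd_eq:
  assumes fin: "finite (carrier G)" and a: "a \<in> carrier G" and b: "b \<in> carrier G"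
    and g: "generate G {a} = generate G {b}"
  shows "closed_nbhd G a \<subseteq> closed_nbhd G b"
proof
  fix u assume u: "u \<in> closed_nbhd G a"
  have uc: "u \<in> carrier G" using u unfolding closed_nbhd_def by auto
  have ab: "a \<in> generate G {b}" using g generate.incl[of a "{a}" G] by auto
  have ba: "b \<in> generate G {a}" using g generate.incl[of b "{b}" G] by auto
  obtain m :: nat where m: "m \<ge> 1" "a = b [^] m" using pn_pospow[OF fin b ab] by metis
  obtain m' :: nat where m': "m' \<ge> 1" "b = a [^] m'" using pn_pospow[OF fin a ba] by metis
  show "u \<in> closed_nbhd G b"
  proof (cases "u = b")
    case True then show ?thesis using b unfolding closed_nbhd_def by auto
  next
    case ub: False
    have "power_adj G b u"
    proof (cases "u = a")
      case True then show ?thesis using ub m a b unfolding power_adj_def by blast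
    next
      case False
      then have "power_adj G a u" using u unfolding closed_nbhd_def by auto
      then have "(\<exists>n::nat. n \<ge> 1 \<and> u = a [^] n) \<or> (\<exists>n::nat. n \<ge> 1 \<and> a = u [^] n)"
        unfolding power_adj_def by auto
      then show ?thesis
      proof
        assume "\<exists>n::nat. n \<ge> 1 \<and> u = a [^] n"
        then obtain n :: nat where n: "n \<ge> 1" "u = a [^] n" by blast
        then have "u = b [^] (m * n)" using m b nat_pow_pow by simp
        moreover have "m * n \<ge> 1" using m n by simp
        ultimately show ?thesis using ub b uc unfolding power_adj_def by metis
      next
        assume "\<exists>n::nat. n \<ge> 1 \<and> a = u [^] n"
        then obtain n :: nat where n: "n \<ge> 1" "a = u [^] n" by blast
        then have "b = u [^] (n * m')" using m' uc nat_pow_pow by simp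
        moreover have "n * m' \<ge> 1" using m' n by simp
        ultimately show ?thesis using ub b uc unfolding power_adj_def by metis
      qed
    qed
    then show ?thesis using uc unfolding closed_nbhd_def by auto
  qed
qed

lemma pn_nbhd_eq2:
  assumes fin: "finite (carrier G)" and a: "a \<in> carrier G" and b: "b \<in> carrier G"
    and g: "generate G {a} = generate G {b}"
  shows "closed_nbhd G a = closed_nbhd G b"
  using pn_nbhd_eq[OF fin a b g] pn_nbhd_eq[OF fin b a g[symmetric]] by blast

lemma pn_key:
  assumes fin: "finite (carrier G)" and a: "a \<in> carrier G" and b: "b \<in> carrier G"
    and n: "closed_nbhd G a = closed_nbhd G b" and o: "ord a = ord b"
  shows "generate G {a} = generate G {b}"
proof (cases "a = b")
  case True then show ?thesis by simp
next
  case False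
  have "b \<in> closed_nbhd G a" using n b unfolding closed_nbhd_def by auto
  then have "power_adj G a b" using False unfolding closed_nbhd_def by auto
  then have "(\<exists>n::nat. b = a [^] n) \<or> (\<exists>n::nat. a = b [^] n)"
    unfolding power_adj_def by auto
  then have sub: "generate G {b} \<subseteq> generate G {a} \<or> generate G {a} \<subseteq> generate G {b}"
    using pn_gen_sub[OF fin a] pn_gen_sub[OF fin b] by auto
  have fa: "finite (generate G {a})" "finite (generate G {b})"
    using fin generate_is_subgroup a b subgroup.subset
    by (metis empty_subsetI insert_subset rev_finite_subset)+
  have c: "card (generate G {a}) = card (generate G {b})"
    using generate_pow_card[OF a] generate_pow_card[OF b] o by simp
  show ?thesis using sub fa c card_subset_eq by metis
qed

lemma pn_ord:
  assumes a: "a \<in> carrier G" and b: "b \<in> carrier G"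
    and g: "generate G {a} = generate G {b}"
  shows "ord a = ord b"
  using generate_pow_card[OF a] generate_pow_card[OF b] g by simp

end

theorem mainTheorem15:
  fixes G :: "('a, 'b) monoid_scheme" and NC :: "'a set"
  assumes "group G" and "finite (carrier G)"
    and "NC \<in> {rel_class G (relN G) x | x. x \<in> carrier G}"
  shows "{NC \<inter> C | C. C \<in> {rel_class G (rel_circ G) y | y. y \<in> carrier G} \<and> NC \<inter> C \<noteq> {}}
       = {D. D \<in> {rel_class G (rel_diamond G) y | y. y \<in> carrier G} \<and> D \<subseteq> NC}"
proof -
  interpret group G by fact
  note fin = assms(2)
  obtain x where x: "x \<in> carrier G" "NC = rel_class G (relN G) x" using assms(3) by blast
  have NCsub: "NC \<subseteq> carrier G" using x unfolding rel_class_def by auto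
  have memNC: "w \<in> NC \<longleftrightarrow> w \<in> carrier G \<and> closed_nbhd G w = closed_nbhd G x" for w
    using x unfolding rel_class_def relN_def by auto
  have core: "NC \<inter> rel_class G (rel_circ G) z = rel_class G (rel_diamond G) z
      \<and> rel_class G (rel_diamond G) z \<subseteq> NC" if z: "z \<in> NC" for z
  proof -
    have zc: "z \<in> carrier G" using z NCsub by auto
    have A: "rel_class G (rel_diamond G) z \<subseteq> NC"
    proof
      fix w assume "w \<in> rel_class G (rel_diamond G) z"
      then have w: "w \<in> carrier G" "generate G {z} = generate G {w}"
        unfolding rel_class_def rel_diamond_def by auto
      then show "w \<in> NC" using pn_nbhd_eq2[OF fin zc w(1) w(2)] z memNC by auto
    qed
    have B: "NC \<inter> rel_class G (rel_circ G) z \<subseteq> rel_class G (rel_diamond G) z"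
    proof
      fix w assume w: "w \<in> NC \<inter> rel_class G (rel_circ G) z"
      then have wc: "w \<in> carrier G" "ord z = ord w" "closed_nbhd G w = closed_nbhd G x"
        unfolding rel_class_def rel_circ_def using memNC by auto
      have "closed_nbhd G z = closed_nbhd G w" using wc(3) z memNC by auto
      then show "w \<in> rel_class G (rel_diamond G) z"
        using pn_key[OF fin zc wc(1) _ wc(2)] wc zc
        unfolding rel_class_def rel_diamond_def by auto
    qed
    have C: "rel_class G (rel_diamond G) z \<subseteq> rel_class G (rel_circ G) z"
    proof
      fix w assume "w \<in> rel_class G (rel_diamond G) z"
      then have w: "w \<in> carrier G" "generate G {z} = generate G {w}"
        unfolding rel_class_def rel_diamond_def by auto
      have "ord z = ord w" by (rule pn_ord[OF zc w(1) w(2)])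
      then show "w \<in> rel_class G (rel_circ G) z"
        using w(1) zc unfolding rel_class_def rel_circ_def by simp
    qed
    show ?thesis using A B C by blast
  qed
  have circeq: "rel_class G (rel_circ G) y = rel_class G (rel_circ G) z"
    if "y \<in> carrier G" "z \<in> carrier G" "ord y = ord z" for y z
    using that unfolding rel_class_def rel_circ_def by auto
  show ?thesis
  proof (intro equalityI subsetI)
    fix S assume "S \<in> {NC \<inter> C | C. C \<in> {rel_class G (rel_circ G) y | y. y \<in> carrier G} \<and> NC \<inter> C \<noteq> {}}"
    then obtain y where y: "y \<in> carrier G" "S = NC \<inter> rel_class G (rel_circ G) y" "S \<noteq> {}" by blast
    then obtain z where z: "z \<in> NC" "z \<in> rel_class G (rel_circ G) y" by blast
    have zc: "z \<in> carrier G" using z NCsub by auto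
    have "ord y = ord z" using z unfolding rel_class_def rel_circ_def by auto
    then have "S = NC \<inter> rel_class G (rel_circ G) z" using circeq[OF y(1) zc] y by simp
    then show "S \<in> {D. D \<in> {rel_class G (rel_diamond G) y | y. y \<in> carrier G} \<and> D \<subseteq> NC}"
      using core[OF z(1)] zc by auto
  next
    fix S assume "S \<in> {D. D \<in> {rel_class G (rel_diamond G) y | y. y \<in> carrier G} \<and> D \<subseteq> NC}"
    then obtain y where y: "y \<in> carrier G" "S = rel_class G (rel_diamond G) y" "S \<subseteq> NC" by blast
    have yS: "y \<in> S" using y unfolding rel_class_def rel_diamond_def by auto
    then have yN: "y \<in> NC" using y by auto
    have "S = NC \<inter> rel_class G (rel_circ G) y" using core[OF yN] y by simp
    moreover have "NC \<inter> rel_class G (rel_circ G) y \<noteq> {}"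
      using yN y(1) unfolding rel_class_def rel_circ_def by auto
    ultimately show "S \<in> {NC \<inter> C | C. C \<in> {rel_class G (rel_circ G) y | y. y \<in> carrier G} \<and> NC \<inter> C \<noteq> {}}"
      using y(1) by blast
  qed
qed

end
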